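(* Let $L_1,L_2\ge 1$ be integers, $S=\{0,1,\dots,L_1\}\times\{0,1,\dots,L_2\}$, $N=\{-1,0,1\}^2$, and let $R$ be a discrete-time Markov chain on $S$ with transition probabilities $p(n,n+u)$, $u\in N$, where $p(n,n+u)=0$ whenever $n+u\notin S$. Let $F:S\to[0,\infty)$ and define $F^0\equiv 0$ and, for $t\ge 0$, $F^{t+1}(n)=F(n)+\sum_{u\in N}p(n,n+u)F^{t}(n+u)$. Let $e_1=(1,0)$, $e_2=(0,1)$, and for $s\in\{1,2\}$ and $n\in S$ with $n+e_s\in S$ set $D^t_s(n)=F^t(n+e_s)-F^t(n)$. Assume that there are real constants $c_{s,n,v,u}$ ($s,v\in\{1,2\}$, $n\in S$ with $n+e_s\in S$, $u\in N$), with $c_{s,n,v,u}=0$ whenever $n+u+e_v\notin S$ or $n+u\notin S$, such that for all $t\ge 0$, all $s\in\{1,2\}$ and all $n$ with $n+e_s\in S$, $$D^{t+1}_s(n)=F(n+e_s)-F(n)+\sum_{v=1}^{2}\sum_{u\in N}c_{s,n,v,u}\,D^t_v(n+u).$$ Suppose that functions $A_s,B_s$ (defined on $\{n\in S: n+e_s\in S\}$, $s=1,2$) take values in $[0,\infty)$ and satisfy, for all $s\in\{1,2\}$ and all $n$ with $n+e_s\in S$, $$F(n+e_s)-F(n)+\sum_{v=1}^{2}\sum_{u\in N}\max\{-c_{s,n,v,u}A_v(n+u),\;c_{s,n,v,u}B_v(n+u)\}\le B_s(n),$$ $$F(n)-F(n+e_s)+\sum_{v=1}^{2}\sum_{u\in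 N}\max\{-c_{s,n,v,u}B_v(n+u),\;c_{s,n,v,u}A_v(n+u)\}\le A_s(n),$$ where terms with $c_{s,n,v,u}=0$ are taken to be $0$. Then for all $t\ge 0$, $s\in\{1,2\}$ and $n$ with $n+e_s\in S$, $$-A_s(n)\le D^t_s(n)\le B_s(n).$$
   Context: $F^t(n)$ is the expected cumulative reward over $t$ steps of the chain started in $n$ with one-step reward $F$; the differences $D^t_s(n)$ are called bias terms. *)

theory Defs
  imports Complex_Main
begin

type_synonym site = "int \<times> int"

definition padd :: "site \<Rightarrow> site \<Rightarrow> site" (infixl "\<oplus>" 65) where
  "n \<oplus> u = (fst n + fst u, snd n + snd u)"

definition Sset :: "int \<Rightarrow> int \<Rightarrow> site set" where
  "Sset L1 L2 = {0..L1} \<times> {0..L2}"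

definition Nset :: "site set" where
  "Nset = {-1,0,1} \<times> {-1,0,1}"

definition unit_e :: "nat \<Rightarrow> site" where
  "unit_e s = (if s = 1 then (1,0) else (0,1))"

primrec Fpow :: "(site \<Rightarrow> site \<Rightarrow> real) \<Rightarrow> (site \<Rightarrow> real) \<Rightarrow> nat \<Rightarrow> site \<Rightarrow> real" where
  "Fpow p F 0 n = 0"
| "Fpow p F (Suc t) n = F n + (\<Sum>u\<in>Nset. p n (n \<oplus> u) * Fpow p F t (n \<oplus> u))"

definition Dbias :: "(site \<Rightarrow> site \<Rightarrow> real) \<Rightarrow> (site \<Rightarrow> real) \<Rightarrow> nat \<Rightarrow> nat \<Rightarrow> site \<Rightarrow> real" where
  "Dbias p F t s n = Fpow p F t (n \<oplus> unit_e s) - Fpow p F t n"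

end

theory Submission
  imports Defs
begin

theorem mainTheorem1:
  fixes L1 L2 :: int
    and p :: "site \<Rightarrow> site \<Rightarrow> real"
    and F :: "site \<Rightarrow> real"
    and c :: "nat \<Rightarrow> site \<Rightarrow> nat \<Rightarrow> site \<Rightarrow> real"
    and A B :: "nat \<Rightarrow> site \<Rightarrow> real"
  assumes L1: "L1 \<ge> 1" and L2: "L2 \<ge> 1"
    and p_nonneg: "\<And>n u. n \<in> Sset L1 L2 \<Longrightarrow> u \<in> Nset \<Longrightarrow> p n (n \<oplus> u) \<ge> 0"
    and p_sum: "\<And>n. n \<in> Sset L1 L2 \<Longrightarrow> (\<Sum>u\<in>Nset. p n (n \<oplus> u)) = 1"
    and p_zero: "\<And>n u. n \<in> Sset L1 L2 \<Longrightarrow> u \<in> Nset \<Longrightarrow> n \<oplus> u \<notin> Sset L1 L2 \<Longrightarrow> p n (n \<oplus> u) = 0"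
    and F_nonneg: "\<And>n. n \<in> Sset L1 L2 \<Longrightarrow> F n \<ge> 0"
    and c_zero: "\<And>s n v u. s \<in> {1,2} \<Longrightarrow> n \<in> Sset L1 L2 \<Longrightarrow> n \<oplus> unit_e s \<in> Sset L1 L2 \<Longrightarrow>
        v \<in> {1,2} \<Longrightarrow> u \<in> Nset \<Longrightarrow>
        (n \<oplus> u \<oplus> unit_e v \<notin> Sset L1 L2 \<or> n \<oplus> u \<notin> Sset L1 L2) \<Longrightarrow> c s n v u = 0"
    and D_rec: "\<And>t s n. s \<in> {1,2} \<Longrightarrow> n \<in> Sset L1 L2 \<Longrightarrow> n \<oplus> unit_e s \<in> Sset L1 L2 \<Longrightarrow>
        Dbias p F (Suc t) s n = F (n \<oplus> unit_e s) - F n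
          + (\<Sum>v\<in>{1,2}. \<Sum>u\<in>Nset. c s n v u * Dbias p F t v (n \<oplus> u))"
    and A_nonneg: "\<And>s n. s \<in> {1,2} \<Longrightarrow> n \<in> Sset L1 L2 \<Longrightarrow> n \<oplus> unit_e s \<in> Sset L1 L2 \<Longrightarrow> A s n \<ge> 0"
    and B_nonneg: "\<And>s n. s \<in> {1,2} \<Longrightarrow> n \<in> Sset L1 L2 \<Longrightarrow> n \<oplus> unit_e s \<in> Sset L1 L2 \<Longrightarrow> B s n \<ge> 0"
    and B_ineq: "\<And>s n. s \<in> {1,2} \<Longrightarrow> n \<in> Sset L1 L2 \<Longrightarrow> n \<oplus> unit_e s \<in> Sset L1 L2 \<Longrightarrow>
        F (n \<oplus> unit_e s) - F n
          + (\<Sum>v\<in>{1,2}. \<Sum>u\<in>Nset. (if c s n v u = 0 then 0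
               else max (- c s n v u * A v (n \<oplus> u)) (c s n v u * B v (n \<oplus> u)))) \<le> B s n"
    and A_ineq: "\<And>s n. s \<in> {1,2} \<Longrightarrow> n \<in> Sset L1 L2 \<Longrightarrow> n \<oplus> unit_e s \<in> Sset L1 L2 \<Longrightarrow>
        F n - F (n \<oplus> unit_e s)
          + (\<Sum>v\<in>{1,2}. \<Sum>u\<in>Nset. (if c s n v u = 0 then 0
               else max (- c s n v u * B v (n \<oplus> u)) (c s n v u * A v (n \<oplus> u)))) \<le> A s n"
  shows "\<forall>t s n. s \<in> {1,2} \<longrightarrow> n \<in> Sset L1 L2 \<longrightarrow> n \<oplus> unit_e s \<in> Sset L1 L2 \<longrightarrow>
           - A s n \<le> Dbias p F t s n \<and> Dbias p F t s n \<le> B s n"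
proof (rule allI)
  fix t
  show "\<forall>s n. s \<in> {1,2} \<longrightarrow> n \<in> Sset L1 L2 \<longrightarrow> n \<oplus> unit_e s \<in> Sset L1 L2 \<longrightarrow>
           - A s n \<le> Dbias p F t s n \<and> Dbias p F t s n \<le> B s n"
  proof (induction t)
    case 0
    then show ?case using A_nonneg B_nonneg by (simp add: Dbias_def)
  next
    case (Suc t)
    show ?case
    proof (intro allI impI)
      fix s n assume s: "s \<in> {1,2::nat}" and n: "n \<in> Sset L1 L2" and ne: "n \<oplus> unit_e s \<in> Sset L1 L2"
      have trm: "c s n v u * Dbias p F t v (n \<oplus> u) \<le> (if c s n v u = 0 then 0
               else max (- c s n v u * A v (n \<oplus> u)) (c s n v u * B v (n \<oplus> u)))
        \<and> - (c s n v u * Dbias p F t v (n \<oplus> u)) \<le> (if c s n v u = 0 then 0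
               else max (- c s n v u * B v (n \<oplus> u)) (c s n v u * A v (n \<oplus> u)))"
        if v: "v \<in> {1,2}" and u: "u \<in> Nset" for v u
      proof (cases "c s n v u = 0")
        case True then show ?thesis by simp
      next
        case False
        then have "n \<oplus> u \<in> Sset L1 L2" "n \<oplus> u \<oplus> unit_e v \<in> Sset L1 L2"
          using c_zero[OF s n ne v u] by auto
        note in_S = this
        have b: "- A v (n \<oplus> u) \<le> Dbias p F t v (n \<oplus> u)" "Dbias p F t v (n \<oplus> u) \<le> B v (n \<oplus> u)"
          using Suc.IH[rule_format, OF v in_S] by auto
        show ?thesis
        proof (cases "c s n v u > 0")
          case True
          have "c s n v u * Dbias p F t v (n \<oplus> u) \<le> c s n v u * B v (n \<oplus> u)"
            using True b by (simp add: mult_left_mono)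
          moreover have "- (c s n v u * Dbias p F t v (n \<oplus> u)) \<le> c s n v u * A v (n \<oplus> u)"
            using True b mult_left_mono[of "- Dbias p F t v (n \<oplus> u)" "A v (n \<oplus> u)" "c s n v u"] by simp
          ultimately show ?thesis using False by (simp add: le_max_iff_disj)
        next
          case nf: False
          hence neg: "c s n v u < 0" using False by simp
          have "c s n v u * Dbias p F t v (n \<oplus> u) \<le> - c s n v u * A v (n \<oplus> u)"
            using neg b mult_left_mono[of "- Dbias p F t v (n \<oplus> u)" "A v (n \<oplus> u)" "- c s n v u"] by simp
          moreover have "- (c s n v u * Dbias p F t v (n \<oplus> u)) \<le> - c s n v u * B v (n \<oplus> u)"
            using neg b mult_left_mono[of "Dbias p F t v (n \<oplus> u)" "B v (n \<oplus> u)" "- c s n v u"] by simp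
          ultimately show ?thesis using False by (simp add: le_max_iff_disj)
        qed
      qed
      have S1: "(\<Sum>v\<in>{1,2}. \<Sum>u\<in>Nset. c s n v u * Dbias p F t v (n \<oplus> u)) \<le>
         (\<Sum>v\<in>{1,2}. \<Sum>u\<in>Nset. (if c s n v u = 0 then 0
               else max (- c s n v u * A v (n \<oplus> u)) (c s n v u * B v (n \<oplus> u))))"
        by (intro sum_mono) (use trm in blast)
      have S2: "(\<Sum>v\<in>{1,2}. \<Sum>u\<in>Nset. - (c s n v u * Dbias p F t v (n \<oplus> u))) \<le>
         (\<Sum>v\<in>{1,2}. \<Sum>u\<in>Nset. (if c s n v u = 0 then 0
               else max (- c s n v u * B v (n \<oplus> u)) (c s n v u * A v (n \<oplus> u))))"
        by (intro sum_mono) (use trm in blast)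
      have S2': "(\<Sum>v\<in>{1,2}. \<Sum>u\<in>Nset. - (c s n v u * Dbias p F t v (n \<oplus> u)))
          = - (\<Sum>v\<in>{1,2}. \<Sum>u\<in>Nset. c s n v u * Dbias p F t v (n \<oplus> u))"
        by (simp add: sum_negf)
      show "- A s n \<le> Dbias p F (Suc t) s n \<and> Dbias p F (Suc t) s n \<le> B s n"
        using D_rec[OF s n ne, of t] S1 S2 S2' B_ineq[OF s n ne] A_ineq[OF s n ne] by linarith
    qed
  qed
qed

end
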